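(* Let $n\ge 2$ and let $A\subset S^n=\{x\in\mathbb R^{n+1}:\|x\|=1\}$ be a closed subset with $0<\mathrm{diam}(A)\le 1$. Then there exist distinct points $a_0,a_1\in A$ and a unit vector $b\in\mathbb R^{n+1}$ such that $\langle b,a_0\rangle=0=\max_{a\in A}\langle b,a\rangle$ and $\langle b,a_1\rangle>-\frac12\|a_1-a_0\|$.
   Context: $\langle\cdot,\cdot\rangle$ is the standard inner product and $\|\cdot\|$ the Euclidean norm on $\mathbb R^{n+1}$. *)

theory Defs
  imports "HOL-Analysis.Analysis"
begin

end

theory Submission
  imports Defs
begin

lemma orth2:
  fixes x y :: "real ^ 'n"
  assumes "CARD('n) \<ge> 3"
  obtains w where "norm w = 1" "w \<bullet> x = 0" "w \<bullet> y = 0"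
proof -
  have "dim {x, y} \<le> card {x, y}" by (rule dim_le_card') auto
  also have "\<dots> \<le> 2" by (simp add: card_insert_le_m1)
  finally have d: "dim {x,y} < DIM(real^'n)" using assms by simp
  obtain z where z: "z \<noteq> 0" "\<And>v. v \<in> span {x,y} \<Longrightarrow> orthogonal z v"
    using orthogonal_to_subspace_exists[OF d] by blast
  have "z \<bullet> x = 0" "z \<bullet> y = 0" using z(2)[of x] z(2)[of y]
    by (auto simp: orthogonal_def span_base)
  then show ?thesis using z(1)
    by (intro that[of "z /\<^sub>R norm z"]) auto
qed

theorem lemma2p2:
  fixes A :: "(real ^ 'n) set"
  assumes "CARD('n) \<ge> 3"
    and "closed A"
    and "A \<subseteq> sphere 0 1"
    and "0 < diameter A" and "diameter A \<le> 1"
  shows "\<exists>a0 a1 b. a0 \<in> A \<and> a1 \<in> A \<and> a0 \<noteq> a1 \<and> norm b = 1 \<and>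
           b \<bullet> a0 = 0 \<and> (\<forall>a\<in>A. b \<bullet> a \<le> 0) \<and>
           b \<bullet> a1 > - (1/2) * norm (a1 - a0)"
proof -
  have bA: "bounded A" using assms(3) bounded_subset bounded_sphere by blast
  have cA: "compact A" using bA assms(2) by (simp add: compact_eq_bounded_closed)
  have un: "\<And>x. x \<in> A \<Longrightarrow> norm x = 1" using assms(3) by auto
  have ii: "\<And>x. x \<in> A \<Longrightarrow> x \<bullet> x = 1" using un by (metis norm_eq_1)
  have dd: "\<And>x y. x \<in> A \<Longrightarrow> y \<in> A \<Longrightarrow> norm (x - y) \<le> 1"
    using diameter_bounded_bound[OF bA] assms(5) by (metis dist_norm order_trans)
  have half: "\<And>x y. x \<in> A \<Longrightarrow> y \<in> A \<Longrightarrow> x \<bullet> y \<ge> 1/2"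
  proof -
    fix x y assume xy: "x \<in> A" "y \<in> A"
    have "(norm (x - y))^2 \<le> 1" using dd[OF xy] norm_ge_zero by (simp add: power_le_one)
    moreover have "(norm (x - y))^2 = x \<bullet> x + y \<bullet> y - 2 * (x \<bullet> y)"
      by (simp add: power2_norm_eq_inner inner_diff inner_commute)
    ultimately show "x \<bullet> y \<ge> 1/2" using ii xy by simp
  qed
  have Ane: "A \<noteq> {}" using assms(4) by auto
  then obtain as where as: "as \<in> A" by blast
  obtain u where u: "norm u = 1" "u \<bullet> as = 0" "u \<bullet> as = 0"
    using orth2[OF assms(1), of as as] by blast
  define r where "r = (\<lambda>a. (u \<bullet> a) / (as \<bullet> a))"
  have pos: "\<And>a. a \<in> A \<Longrightarrow> as \<bullet> a > 0" using half as by fastforce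
  have "continuous_on A r" unfolding r_def
    by (intro continuous_intros) (use pos in force)
  then obtain a0 where a0: "a0 \<in> A" "\<And>a. a \<in> A \<Longrightarrow> r a \<le> r a0"
    using continuous_attains_sup[OF cA Ane] by blast
  define M where "M = r a0"
  define v where "v = u - M *\<^sub>R as"
  have v1: "\<And>a. a \<in> A \<Longrightarrow> v \<bullet> a \<le> 0"
  proof -
    fix a assume a: "a \<in> A"
    have "u \<bullet> a \<le> M * (as \<bullet> a)" using a0(2)[OF a] pos[OF a]
      unfolding M_def r_def by (simp add: divide_le_eq)
    then show "v \<bullet> a \<le> 0" by (simp add: v_def inner_diff_left)
  qed
  have v0: "v \<bullet> a0 = 0" using pos[OF a0(1)]
    by (simp add: v_def inner_diff_left M_def r_def)
  have "v \<bullet> v = 1 + M^2" using u ii[OF as]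
    by (simp add: v_def inner_diff inner_commute power2_eq_square norm_eq_1)
  hence vn: "norm v > 0" by (metis add_pos_nonneg inner_gt_zero_iff zero_less_norm_iff zero_less_one zero_le_power2)
  define S0 where "S0 = {e. norm e = 1 \<and> e \<bullet> a0 = 0 \<and> (\<forall>x\<in>A. e \<bullet> x \<le> 0)}"
  have b0: "v /\<^sub>R norm v \<in> S0" using vn v0 v1 unfolding S0_def
    by (auto intro!: mult_nonneg_nonpos)
  have "S0 = sphere 0 1 \<inter> {e. a0 \<bullet> e = 0} \<inter> (\<Inter>x\<in>A. {e. x \<bullet> e \<le> 0})"
    unfolding S0_def by (auto simp: inner_commute)
  hence "closed S0" by (auto intro!: closed_Int closed_INT closed_halfspace_le closed_hyperplane
     simp del: inner_commute)
  moreover have "bounded S0" unfolding S0_def bounded_iff by auto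
  ultimately have cS0: "compact S0" by (simp add: compact_eq_bounded_closed)
  obtain a where a: "a \<in> A" "a \<noteq> a0"
  proof -
    have "\<not> A \<subseteq> {a0}"
    proof
      assume "A \<subseteq> {a0}"
      then have "diameter A \<le> diameter {a0}" by (intro diameter_subset) auto
      then show False using assms(4) by simp
    qed
    then show ?thesis using that by blast
  qed
  define c where "c = a - (a \<bullet> a0) *\<^sub>R a0"
  have ca0: "c \<bullet> a0 = 0" using ii[OF a0(1)] by (simp add: c_def inner_diff_left)
  have cn0: "c \<noteq> 0"
  proof
    assume "c = 0"
    then have "c \<bullet> c = 0" by simp
    moreover have "c \<bullet> c = 1 - (a \<bullet> a0)^2" using ii[OF a0(1)] ii[OF a(1)]
      by (simp add: c_def inner_diff inner_commute power2_eq_square)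
    ultimately have "(a \<bullet> a0)^2 = 1" by simp
    then have "a \<bullet> a0 = 1 \<or> a \<bullet> a0 = -1" by (simp add: power2_eq_1_iff)
    with half[OF a(1) a0(1)] have "a \<bullet> a0 = 1" by linarith
    then have "(norm (a - a0))^2 = 0" using ii[OF a0(1)] ii[OF a(1)]
      by (simp add: power2_norm_eq_inner inner_diff inner_commute)
    then show False using a(2) by simp
  qed
  have cS: "\<And>e. e \<in> S0 \<Longrightarrow> e \<bullet> c \<le> 0"
    using a(1) by (auto simp: S0_def c_def inner_diff_right)
  have "S0 \<noteq> {}" using b0 by blast
  moreover have "continuous_on S0 (\<lambda>e. e \<bullet> c)" by (intro continuous_intros)
  ultimately obtain b where b: "b \<in> S0" "\<And>e. e \<in> S0 \<Longrightarrow> e \<bullet> c \<le> b \<bullet> c"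
    using continuous_attains_sup[OF cS0, of "\<lambda>e. e \<bullet> c"] by blast
  have bn: "norm b = 1" "b \<bullet> a0 = 0" "\<And>x. x \<in> A \<Longrightarrow> b \<bullet> x \<le> 0" using b(1) by (auto simp: S0_def)
  have bb: "b \<bullet> b = 1" using bn(1) by (simp add: norm_eq_1)
  obtain p where p: "p \<noteq> 0" "p \<bullet> a0 = 0" "p \<bullet> b = 0" "p \<bullet> c \<ge> 0"
      "p \<bullet> c > 0 \<or> b \<bullet> c < 0"
  proof (cases "c - (c \<bullet> b) *\<^sub>R b = 0")
    case False
    define q where "q = c - (c \<bullet> b) *\<^sub>R b"
    have "q \<bullet> c = q \<bullet> q" using bb
      by (simp add: q_def inner_diff inner_commute power2_eq_square algebra_simps)
    then have "q \<bullet> c > 0" using False q_def by simp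
    moreover have "q \<bullet> a0 = 0" "q \<bullet> b = 0" using ca0 bn(2) bb
      by (simp_all add: q_def inner_diff_left inner_diff_right)
    ultimately show ?thesis using that[of q] False q_def by auto
  next
    case True
    then have ceq: "c = (c \<bullet> b) *\<^sub>R b" by simp
    obtain w where w: "norm w = 1" "w \<bullet> a0 = 0" "w \<bullet> b = 0"
      using orth2[OF assms(1)] by blast
    have "w \<bullet> c = 0" by (subst ceq) (simp add: w(3))
    moreover have "b \<bullet> c < 0"
    proof -
      have "b \<bullet> c \<le> 0" using cS[OF b(1)] .
      moreover have "b \<bullet> c \<noteq> 0" using ceq cn0 by (metis inner_commute scale_zero_left)
      ultimately show ?thesis by simp
    qed
    moreover have "w \<noteq> 0" using w(1) by auto
    ultimately show ?thesis using that[of w] w by auto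
  qed
  define s where "s = 1 / (2 * norm p)"
  have np: "norm p > 0" using p(1) by simp
  have sp: "s * norm p = 1/2" using np by (simp add: s_def)
  have sgt: "s > 0" using np by (simp add: s_def)
  define bp where "bp = b + s *\<^sub>R p"
  have "\<not> (\<forall>x\<in>A. bp \<bullet> x \<le> 0)"
  proof
    assume H: "\<forall>x\<in>A. bp \<bullet> x \<le> 0"
    have "bp \<bullet> bp = b \<bullet> b + 2 * s * (p \<bullet> b) + s^2 * (p \<bullet> p)"
      by (simp add: bp_def inner_add inner_commute power2_eq_square algebra_simps)
    also have "\<dots> = 1 + (s * norm p)^2" using bb p(3)
      by (simp add: power_mult_distrib power2_norm_eq_inner)
    finally have "bp \<bullet> bp = 1 + (s * norm p)^2" .
    then have N2: "(norm bp)^2 = 5/4" using sp by (simp add: power2_norm_eq_inner[symmetric] power2_eq_square)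
    define N where "N = norm bp"
    have N1: "N > 1"
    proof -
      have "N^2 > 1^2" using N2 N_def by simp
      then show ?thesis using N_def by (smt (verit) norm_ge_zero power_mono)
    qed
    have bpa: "bp \<bullet> a0 = 0" using bn(2) p(2) by (simp add: bp_def inner_add_left)
    have "bp /\<^sub>R N \<in> S0" unfolding S0_def using N1 H bpa
      by (auto simp: N_def field_simps intro!: mult_nonneg_nonpos)
    then have "(bp /\<^sub>R N) \<bullet> c \<le> b \<bullet> c" by (rule b(2))
    then have "(b \<bullet> c + s * (p \<bullet> c)) / N \<le> b \<bullet> c" by (simp add: bp_def inner_add_left divide_inverse_commute)
    then have "b \<bullet> c + s * (p \<bullet> c) \<le> N * (b \<bullet> c)" using N1 by (simp add: divide_le_eq mult.commute)
    moreover have "b \<bullet> c \<le> 0" using cS[OF b(1)] .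
    moreover have "b \<bullet> c \<le> 0" using cS[OF b(1)] .
    moreover have e1: "(N - 1) * (b \<bullet> c) = N * (b \<bullet> c) - b \<bullet> c" by (simp add: left_diff_distrib)
    moreover have "s * (p \<bullet> c) \<ge> 0" using sgt p(4) by simp
    moreover have "s * (p \<bullet> c) > 0 \<or> (N - 1) * (b \<bullet> c) < 0"
      using p(5) sgt N1 by (auto intro: mult_pos_pos mult_pos_neg)
    moreover have "(N - 1) * (b \<bullet> c) \<le> 0" using N1 cS[OF b(1)] by (intro mult_nonneg_nonpos) auto
    ultimately show False by linarith
  qed
  then obtain a1 where a1: "a1 \<in> A" "bp \<bullet> a1 > 0" by auto
  have "a1 \<noteq> a0" using a1(2) bn(2) p(2) by (auto simp: bp_def inner_add_left)
  moreover have "b \<bullet> a1 > - (1/2) * norm (a1 - a0)"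
  proof -
    have "p \<bullet> a1 = p \<bullet> (a1 - a0)" using p(2) by (simp add: inner_diff_right)
    also have "\<dots> \<le> norm p * norm (a1 - a0)" by (rule norm_cauchy_schwarz)
    finally have "s * (p \<bullet> a1) \<le> (1/2) * norm (a1 - a0)" using sp sgt
      by (metis mult.assoc mult_left_mono less_imp_le)
    moreover have "b \<bullet> a1 + s * (p \<bullet> a1) > 0" using a1(2) by (simp add: bp_def inner_add_left)
    ultimately show ?thesis by linarith
  qed
  ultimately show ?thesis using a0(1) a1(1) bn by blast
qed

end
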